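(* The class of unital equivariantly supported reflexive based quantal frames satisfying the inverse law can be identified with the class of inverse quantal frames. Precisely: if $Q$ is an equivariantly supported reflexive based quantal frame (with base locale $A$, support $\varsigma$ and $\upsilon:Q\to A$) which has a multiplicative unit $e$ and satisfies the inverse law, then $Q$, as a unital involutive quantale, is an inverse quantal frame; and conversely every inverse quantal frame $Q$, regarded as a based quantal frame over $A={\downarrow}e$ with actions given by multiplication, support $\varsigma(q)=q1_Q\wedge e$ and $\upsilon(q)=q\wedge e$, is an equivariantly supported reflexive based quantal frame satisfying the inverse law.
   Context: For a locale $A$, an $A$-$A$-bimodule is a sup-lattice $M$ with actions $a\triangleright m$, $m\triangleleft a$ preserving joins in each variable, with $1_A\triangleright m=m$, $(a\wedge b)\triangleright m=a\triangleright(b\triangleright m)$, $m\triangleleft1_A=m$, $m\triangleleft(a\wedge b)=(m\triangleleft a)\triangleleft b$, $(a\triangleright m)\triangleleft b=a\triangleright(m\triangleleft b)$. An $A$-$A$-quantale is such a $Q$ with associative join-preserving multiplication and $(a\triangleright x)y=a\triangleright(xy)$, $(x\triangleleft a)y=x(a\triangleright y)$, $(xy)\triangleleft a=x(y\triangleleft a)$; involutive if there is a join-preserving $x\mapsto x^*$ with $x^{**}=x$, $(xy)^*=y^*x^*$, $(a\triangleright(x\triangleleft b))^*=b\triangleright(x^*\triangleleft a)$. $1_Q$ is the top. A support is a join-preserving $\varsigma:Q\to A$ with $\varsigma(1_Q)=1_A$, $\varsigma(x)\triangleright y\le xx^*y$, $\varsigma(x)\triangleright x=x$; equivariant if $\varsigma(a\triangleright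 x)=a\wedge\varsigma(x)$. A based quantal frame is an involutive $A$-$A$-quantale which is a frame with $(a\triangleright x)\wedge y=a\triangleright(x\wedge y)$, $(x\triangleleft a)\wedge y=(x\wedge y)\triangleleft a$; reflexive: a frame homomorphism $\upsilon:Q\to A$ with $\upsilon(a\triangleright1_Q)=a=\upsilon(1_Q\triangleleft a)$. Inverse law: $\upsilon(a)\triangleright1_Q=\bigvee_{xy^*\le a}x\wedge y$ for all $a\in Q$. An inverse quantal frame is a unital involutive quantale $Q$ (unit $e$) whose lattice is a frame, with a stable unital support, i.e. a join-preserving $\varsigma:Q\to Q$ with $\varsigma(x)\le e$, $\varsigma(x)\le xx^*$, $x\le\varsigma(x)x$ and $\varsigma(xy)=\varsigma(x\varsigma(y))$, such that $\bigvee\{s\in Q\mid ss^*\vee s^*s\le e\}=1_Q$. *)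

theory Defs
  imports Main
begin

definition is_frame_type :: "'q::complete_lattice itself \<Rightarrow> bool" where
  "is_frame_type _ \<longleftrightarrow> (\<forall>(x::'q) S. inf x (Sup S) = Sup ((inf x) ` S))"

text \<open>A locale A is represented by a carrier set AC inside a complete lattice, closed under
  arbitrary joins and binary meets (computed in the ambient lattice), with the frame
  distributive law. Its top element is Sup AC. (Any locale A is such a carrier with AC = UNIV;
  the down-set of an element of a frame is another instance.)\<close>
definition locale_carrier :: "'a::complete_lattice set \<Rightarrow> bool" where
  "locale_carrier AC \<longleftrightarrow>
     (\<forall>S. S \<subseteq> AC \<longrightarrow> Sup S \<in> AC) \<and>
     (\<forall>a\<in>AC. \<forall>b\<in>AC. inf a b \<in> AC) \<and>
     (\<forall>a\<in>AC. \<forall>S. S \<subseteq> AC \<longrightarrow> inf a (Sup S) = Sup ((inf a) ` S))"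

abbreviation topA :: "'a::complete_lattice set \<Rightarrow> 'a" where
  "topA AC \<equiv> Sup AC"

definition join_pres :: "('x::complete_lattice \<Rightarrow> 'y::complete_lattice) \<Rightarrow> bool" where
  "join_pres f \<longleftrightarrow> (\<forall>X. f (Sup X) = Sup (f ` X))"

definition bimodule ::
  "'a::complete_lattice set \<Rightarrow> ('a \<Rightarrow> 'q::complete_lattice \<Rightarrow> 'q) \<Rightarrow> ('q \<Rightarrow> 'a \<Rightarrow> 'q) \<Rightarrow> bool" where
  "bimodule AC lact ract \<longleftrightarrow>
     locale_carrier AC \<and>
     (\<forall>S m. S \<subseteq> AC \<longrightarrow> lact (Sup S) m = Sup ((\<lambda>a. lact a m) ` S)) \<and>
     (\<forall>a\<in>AC. join_pres (lact a)) \<and>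
     (\<forall>S m. S \<subseteq> AC \<longrightarrow> ract m (Sup S) = Sup ((\<lambda>a. ract m a) ` S)) \<and>
     (\<forall>a\<in>AC. join_pres (\<lambda>m. ract m a)) \<and>
     (\<forall>m. lact (topA AC) m = m) \<and>
     (\<forall>a\<in>AC. \<forall>b\<in>AC. \<forall>m. lact (inf a b) m = lact a (lact b m)) \<and>
     (\<forall>m. ract m (topA AC) = m) \<and>
     (\<forall>a\<in>AC. \<forall>b\<in>AC. \<forall>m. ract m (inf a b) = ract (ract m a) b) \<and>
     (\<forall>a\<in>AC. \<forall>b\<in>AC. \<forall>m. ract (lact a m) b = lact a (ract m b))"

definition AA_quantale ::
  "'a::complete_lattice set \<Rightarrow> ('a \<Rightarrow> 'q::complete_lattice \<Rightarrow> 'q) \<Rightarrow> ('q \<Rightarrow> 'a \<Rightarrow> 'q)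
   \<Rightarrow> ('q \<Rightarrow> 'q \<Rightarrow> 'q) \<Rightarrow> bool" where
  "AA_quantale AC lact ract mult \<longleftrightarrow>
     bimodule AC lact ract \<and>
     (\<forall>x y z. mult (mult x y) z = mult x (mult y z)) \<and>
     (\<forall>y. join_pres (\<lambda>x. mult x y)) \<and>
     (\<forall>x. join_pres (mult x)) \<and>
     (\<forall>a\<in>AC. \<forall>x y. mult (lact a x) y = lact a (mult x y)) \<and>
     (\<forall>a\<in>AC. \<forall>x y. mult (ract x a) y = mult x (lact a y)) \<and>
     (\<forall>a\<in>AC. \<forall>x y. ract (mult x y) a = mult x (ract y a))"

definition involutive_AA_quantale ::
  "'a::complete_lattice set \<Rightarrow> ('a \<Rightarrow> 'q::complete_lattice \<Rightarrow> 'q) \<Rightarrow> ('q \<Rightarrow> 'a \<Rightarrow> 'q)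
   \<Rightarrow> ('q \<Rightarrow> 'q \<Rightarrow> 'q) \<Rightarrow> ('q \<Rightarrow> 'q) \<Rightarrow> bool" where
  "involutive_AA_quantale AC lact ract mult star \<longleftrightarrow>
     AA_quantale AC lact ract mult \<and>
     join_pres star \<and>
     (\<forall>x. star (star x) = x) \<and>
     (\<forall>x y. star (mult x y) = mult (star y) (star x)) \<and>
     (\<forall>a\<in>AC. \<forall>b\<in>AC. \<forall>x. star (lact a (ract x b)) = lact b (ract (star x) a))"

definition is_support ::
  "'a::complete_lattice set \<Rightarrow> ('a \<Rightarrow> 'q::complete_lattice \<Rightarrow> 'q)
   \<Rightarrow> ('q \<Rightarrow> 'q \<Rightarrow> 'q) \<Rightarrow> ('q \<Rightarrow> 'q) \<Rightarrow> ('q \<Rightarrow> 'a) \<Rightarrow> bool" where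
  "is_support AC lact mult star \<sigma> \<longleftrightarrow>
     (\<forall>x. \<sigma> x \<in> AC) \<and>
     join_pres \<sigma> \<and>
     \<sigma> top = topA AC \<and>
     (\<forall>x y. lact (\<sigma> x) y \<le> mult (mult x (star x)) y) \<and>
     (\<forall>x. lact (\<sigma> x) x = x)"

definition equivariant_support ::
  "'a::complete_lattice set \<Rightarrow> ('a \<Rightarrow> 'q::complete_lattice \<Rightarrow> 'q) \<Rightarrow> ('q \<Rightarrow> 'a) \<Rightarrow> bool" where
  "equivariant_support AC lact \<sigma> \<longleftrightarrow> (\<forall>a\<in>AC. \<forall>x. \<sigma> (lact a x) = inf a (\<sigma> x))"

definition based_quantal_frame ::
  "'a::complete_lattice set \<Rightarrow> ('a \<Rightarrow> 'q::complete_lattice \<Rightarrow> 'q) \<Rightarrow> ('q \<Rightarrow> 'a \<Rightarrow> 'q)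
   \<Rightarrow> ('q \<Rightarrow> 'q \<Rightarrow> 'q) \<Rightarrow> ('q \<Rightarrow> 'q) \<Rightarrow> bool" where
  "based_quantal_frame AC lact ract mult star \<longleftrightarrow>
     involutive_AA_quantale AC lact ract mult star \<and>
     is_frame_type TYPE('q) \<and>
     (\<forall>a\<in>AC. \<forall>x y. inf (lact a x) y = lact a (inf x y)) \<and>
     (\<forall>a\<in>AC. \<forall>x y. inf (ract x a) y = ract (inf x y) a)"

definition frame_hom_to ::
  "'a::complete_lattice set \<Rightarrow> ('q::complete_lattice \<Rightarrow> 'a) \<Rightarrow> bool" where
  "frame_hom_to AC f \<longleftrightarrow>
     (\<forall>x. f x \<in> AC) \<and> join_pres f \<and> (\<forall>x y. f (inf x y) = inf (f x) (f y)) \<and> f top = topA AC"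

definition reflexive_bqf ::
  "'a::complete_lattice set \<Rightarrow> ('a \<Rightarrow> 'q::complete_lattice \<Rightarrow> 'q) \<Rightarrow> ('q \<Rightarrow> 'a \<Rightarrow> 'q)
   \<Rightarrow> ('q \<Rightarrow> 'a) \<Rightarrow> bool" where
  "reflexive_bqf AC lact ract \<upsilon> \<longleftrightarrow>
     frame_hom_to AC \<upsilon> \<and>
     (\<forall>a\<in>AC. \<upsilon> (lact a top) = a \<and> \<upsilon> (ract top a) = a)"

definition inverse_law ::
  "('a \<Rightarrow> 'q::complete_lattice \<Rightarrow> 'q) \<Rightarrow> ('q \<Rightarrow> 'q \<Rightarrow> 'q) \<Rightarrow> ('q \<Rightarrow> 'q) \<Rightarrow> ('q \<Rightarrow> 'a) \<Rightarrow> bool" where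
  "inverse_law lact mult star \<upsilon> \<longleftrightarrow>
     (\<forall>a. lact (\<upsilon> a) top = Sup {inf x y | x y. mult x (star y) \<le> a})"

definition mult_unit :: "('q \<Rightarrow> 'q \<Rightarrow> 'q) \<Rightarrow> 'q \<Rightarrow> bool" where
  "mult_unit mult e \<longleftrightarrow> (\<forall>x. mult e x = x \<and> mult x e = x)"

definition unital_involutive_quantale ::
  "('q::complete_lattice \<Rightarrow> 'q \<Rightarrow> 'q) \<Rightarrow> ('q \<Rightarrow> 'q) \<Rightarrow> 'q \<Rightarrow> bool" where
  "unital_involutive_quantale mult star e \<longleftrightarrow>
     (\<forall>x y z. mult (mult x y) z = mult x (mult y z)) \<and>
     (\<forall>y. join_pres (\<lambda>x. mult x y)) \<and>
     (\<forall>x. join_pres (mult x)) \<and>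
     mult_unit mult e \<and>
     join_pres star \<and>
     (\<forall>x. star (star x) = x) \<and>
     (\<forall>x y. star (mult x y) = mult (star y) (star x))"

definition stable_unital_support ::
  "('q::complete_lattice \<Rightarrow> 'q \<Rightarrow> 'q) \<Rightarrow> ('q \<Rightarrow> 'q) \<Rightarrow> 'q \<Rightarrow> ('q \<Rightarrow> 'q) \<Rightarrow> bool" where
  "stable_unital_support mult star e \<sigma> \<longleftrightarrow>
     join_pres \<sigma> \<and>
     (\<forall>x. \<sigma> x \<le> e) \<and>
     (\<forall>x. \<sigma> x \<le> mult x (star x)) \<and>
     (\<forall>x. x \<le> mult (\<sigma> x) x) \<and>
     (\<forall>x y. \<sigma> (mult x y) = \<sigma> (mult x (\<sigma> y)))"

definition inverse_quantal_frame ::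
  "('q::complete_lattice \<Rightarrow> 'q \<Rightarrow> 'q) \<Rightarrow> ('q \<Rightarrow> 'q) \<Rightarrow> 'q \<Rightarrow> bool" where
  "inverse_quantal_frame mult star e \<longleftrightarrow>
     unital_involutive_quantale mult star e \<and>
     is_frame_type TYPE('q) \<and>
     (\<exists>\<sigma>. stable_unital_support mult star e \<sigma>) \<and>
     Sup {s. sup (mult s (star s)) (mult (star s) s) \<le> e} = top"

end

theory Submission
  imports Defs
begin

lemma jp_mono: "join_pres f \<Longrightarrow> x \<le> y \<Longrightarrow> f x \<le> f y"
proof -
  assume j: "join_pres f" and xy: "x \<le> y"
  have "f y = f (Sup {x, y})" using xy by (simp add: sup_absorb2)
  also have "\<dots> = Sup {f x, f y}" using j[unfolded join_pres_def, rule_format, of "{x,y}"] by simp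
  moreover have "f x \<le> Sup {f x, f y}" by (rule Sup_upper) simp
  ultimately show ?thesis by metis
qed

lemma frame_inf_Sup:
  fixes L R :: "'q::complete_lattice set"
  assumes fr: "is_frame_type TYPE('q)" and h: "\<And>l r. l \<in> L \<Longrightarrow> r \<in> R \<Longrightarrow> inf l r \<le> z"
  shows "inf (Sup L) (Sup R) \<le> z"
proof -
  have d: "\<And>(x::'q) S. inf x (Sup S) = Sup ((inf x) ` S)" using fr unfolding is_frame_type_def by blast
  have "inf (Sup L) (Sup R) = Sup ((inf (Sup L)) ` R)" by (rule d)
  also have "\<dots> \<le> z"
  proof (rule Sup_least)
    fix w assume "w \<in> (inf (Sup L)) ` R"
    then obtain r where r: "r \<in> R" "w = inf (Sup L) r" by auto
    have "w = inf r (Sup L)" using r by (simp add: inf_commute)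
    also have "\<dots> = Sup ((inf r) ` L)" by (rule d)
    also have "\<dots> \<le> z" using h r(1) by (auto intro!: Sup_least simp: inf_commute)
    finally show "w \<le> z" .
  qed
  finally show ?thesis .
qed

lemma part2:
  fixes mult :: "'p::complete_lattice \<Rightarrow> 'p \<Rightarrow> 'p" and star e
  assumes iqf: "inverse_quantal_frame mult star e"
  shows "(let AC = {a. a \<le> e}; \<sigma> = (\<lambda>q. inf (mult q top) e); \<upsilon> = (\<lambda>q. inf q e) in
        based_quantal_frame AC mult mult mult star \<and>
        is_support AC mult mult star \<sigma> \<and> equivariant_support AC mult \<sigma> \<and>
        reflexive_bqf AC mult mult \<upsilon> \<and>
        inverse_law mult mult star \<upsilon>)"
proof -
  from iqf obtain \<zeta> where uiq: "unital_involutive_quantale mult star e"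
    and fr: "is_frame_type TYPE('p)" and st: "stable_unital_support mult star e \<zeta>"
    and pu: "Sup {s. sup (mult s (star s)) (mult (star s) s) \<le> e} = top"
    unfolding inverse_quantal_frame_def by blast
  have dist: "\<And>(x::'p) S. inf x (Sup S) = Sup ((inf x) ` S)" using fr unfolding is_frame_type_def by blast
  from uiq have assoc: "\<And>x y z. mult (mult x y) z = mult x (mult y z)"
    and mjl: "\<And>y. join_pres (\<lambda>x. mult x y)" and mjr: "\<And>x. join_pres (mult x)"
    and ul: "\<And>x. mult e x = x" and ur: "\<And>x. mult x e = x"
    and sjp: "join_pres star" and ss: "\<And>x. star (star x) = x"
    and sm: "\<And>x y. star (mult x y) = mult (star y) (star x)"
    unfolding unital_involutive_quantale_def mult_unit_def by auto
  from st have zjp: "join_pres \<zeta>" and ze: "\<And>x. \<zeta> x \<le> e" and zxx: "\<And>x. \<zeta> x \<le> mult x (star x)"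
    and xz: "\<And>x. x \<le> mult (\<zeta> x) x" and zst: "\<And>x y. \<zeta> (mult x y) = \<zeta> (mult x (\<zeta> y))"
    unfolding stable_unital_support_def by auto
  have mmono: "mult x y \<le> mult x' y'" if "x \<le> x'" "y \<le> y'" for x y x' y'
    using jp_mono[OF mjl that(1)] jp_mono[OF mjr that(2)] by (meson order_trans)
  have smono: "x \<le> y \<Longrightarrow> star x \<le> star y" for x y using jp_mono[OF sjp] .
  have zmono: "x \<le> y \<Longrightarrow> \<zeta> x \<le> \<zeta> y" for x y using jp_mono[OF zjp] .
  have se: "star e = e"
  proof -
    have "e = star (mult (star e) e)" using ur ss by simp
    also have "\<dots> = mult (star e) e" using sm ss by simp
    also have "\<dots> = star e" using ur by simp
    finally show ?thesis by simp
  qed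
  have stop: "star top = top"
  proof -
    have "star (star top) \<le> star top" by (rule smono) simp
    thus ?thesis using ss by (simp add: top_le)
  qed
  have sinf: "star (inf x y) = inf (star x) (star y)" for x y
  proof (rule antisym)
    show "star (inf x y) \<le> inf (star x) (star y)" by (simp add: smono)
    have "star (inf (star x) (star y)) \<le> inf x y"
      using smono[of "inf (star x) (star y)" "star x"] smono[of "inf (star x) (star y)" "star y"] ss by simp
    then have "star (star (inf (star x) (star y))) \<le> star (inf x y)" by (rule smono)
    then show "inf (star x) (star y) \<le> star (inf x y)" using ss by simp
  qed
  have sle: "a \<le> e \<Longrightarrow> star a \<le> e" for a using smono[of a e] se by simp
  have za: "a \<le> e \<Longrightarrow> \<zeta> a = a" for a
  proof (rule antisym)
    assume a: "a \<le> e"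
    have "\<zeta> a \<le> mult a (star a)" by (rule zxx)
    also have "\<dots> \<le> mult a e" using mmono sle a by simp
    finally show "\<zeta> a \<le> a" using ur by simp
    have "a \<le> mult (\<zeta> a) a" by (rule xz)
    also have "\<dots> \<le> mult (\<zeta> a) e" using mmono a by simp
    finally show "a \<le> \<zeta> a" using ur by simp
  qed
  have aas: "a \<le> e \<Longrightarrow> mult a (star a) = a" for a
  proof (rule antisym)
    assume a: "a \<le> e"
    show "mult a (star a) \<le> a" using mmono[of a a "star a" e] sle a ur by simp
    show "a \<le> mult a (star a)" using zxx[of a] za a by simp
  qed
  have F1: "a \<le> e \<Longrightarrow> star a = a" for a
    using aas[of a] sm[of a "star a"] ss by metis
  have F2: "a \<le> e \<Longrightarrow> b \<le> e \<Longrightarrow> mult a b = inf a b" for a b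
  proof (rule antisym)
    assume a: "a \<le> e" and b: "b \<le> e"
    show "mult a b \<le> inf a b" using mmono[of a a b e] mmono[of a e b b] a b ul ur by simp
    have c: "inf a b \<le> e" using a by (simp add: le_infI1)
    have "inf a b = mult (inf a b) (inf a b)" using aas[OF c] F1[OF c] by simp
    also have "\<dots> \<le> mult a b" by (rule mmono) simp_all
    finally show "inf a b \<le> mult a b" .
  qed
  have ztop: "\<zeta> top = e" using za[of e] zmono[of e top] ze[of top] by simp
  have zxtop: "\<zeta> (mult x top) = \<zeta> x" for x using zst[of x top] ztop ur by simp
  have F5l: "a \<le> e \<Longrightarrow> inf (mult a top) e = a" for a
  proof (rule antisym)
    assume a: "a \<le> e"
    show "a \<le> inf (mult a top) e" using a mmono[of a a e top] ur by simp
    have "inf (mult a top) e = \<zeta> (inf (mult a top) e)" using za by simp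
    also have "\<dots> \<le> \<zeta> (mult a top)" by (rule zmono) simp
    also have "\<dots> = a" using zxtop za a by simp
    finally show "inf (mult a top) e \<le> a" .
  qed
  have F5r: "a \<le> e \<Longrightarrow> inf (mult top a) e = a" for a
  proof -
    assume a: "a \<le> e"
    have "star (inf (mult top a) e) = inf (mult a top) e" using sinf sm F1[OF a] stop se by simp
    then have "star (inf (mult top a) e) = a" using F5l a by simp
    then show ?thesis using ss F1[OF a] by metis
  qed
  have F3l: "a \<le> e \<Longrightarrow> mult a x = inf (mult a top) x" for a x
  proof (rule antisym)
    assume a: "a \<le> e"
    show "mult a x \<le> inf (mult a top) x" using mmono[of a a x top] mmono[of a e x x] a ul by simp
    let ?y = "inf (mult a top) x"
    have "\<zeta> ?y \<le> \<zeta> (mult a top)" by (rule zmono) simp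
    then have zy: "\<zeta> ?y \<le> a" using zxtop za a by simp
    have "?y \<le> mult (\<zeta> ?y) ?y" by (rule xz)
    also have "\<dots> \<le> mult a x" using zy by (rule mmono) simp
    finally show "?y \<le> mult a x" .
  qed
  have F3r: "a \<le> e \<Longrightarrow> mult x a = inf x (mult top a)" for a x
  proof -
    assume a: "a \<le> e"
    have "star (mult x a) = mult a (star x)" using sm F1[OF a] by simp
    also have "\<dots> = inf (mult a top) (star x)" by (rule F3l[OF a])
    finally have "star (mult x a) = inf (mult a top) (star x)" .
    then have "mult x a = star (inf (mult a top) (star x))" using ss by metis
    also have "\<dots> = inf (mult top a) x" using sinf sm ss stop F1[OF a] by simp
    finally show ?thesis by (simp add: inf_commute)
  qed
  have F4: "\<zeta> x = inf (mult x top) e" for x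
  proof (rule antisym)
    have "\<zeta> x \<le> mult x top" using zxx[of x] mmono[of x x "star x" top] by simp
    then show "\<zeta> x \<le> inf (mult x top) e" using ze by simp
    have "inf (mult x top) e = \<zeta> (inf (mult x top) e)" using za by simp
    also have "\<dots> \<le> \<zeta> (mult x top)" by (rule zmono) simp
    also have "\<dots> = \<zeta> x" by (rule zxtop)
    finally show "inf (mult x top) e \<le> \<zeta> x" .
  qed
  have topA: "Sup {a. a \<le> e} = e" by (rule Sup_eqI) auto
  define AC where "AC = {a. a \<le> e}"
  have AC: "a \<in> AC \<longleftrightarrow> a \<le> e" for a unfolding AC_def by simp
  have lc: "locale_carrier AC"
    unfolding locale_carrier_def AC_def using dist by (auto intro: Sup_least le_infI1)
  have bm: "bimodule AC mult mult"
    unfolding bimodule_def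
  proof (intro conjI allI ballI impI)
    show "locale_carrier AC" by (rule lc)
    fix S m a b assume "S \<subseteq> AC"
    show "mult (Sup S) m = Sup ((\<lambda>a. mult a m) ` S)" using mjl[of m] unfolding join_pres_def by blast
    show "mult m (Sup S) = Sup ((\<lambda>a. mult m a) ` S)" using mjr[of m] unfolding join_pres_def by blast
  next
    fix a show "join_pres (mult a)" by (rule mjr)
  next
    fix a show "join_pres (\<lambda>m. mult m a)" by (rule mjl)
  next
    fix m show "mult (Sup AC) m = m" using topA ul unfolding AC_def by simp
  next
    fix m show "mult m (Sup AC) = m" using topA ur unfolding AC_def by simp
  next
    fix a b m assume "a \<in> AC" "b \<in> AC"
    then have "a \<le> e" "b \<le> e" using AC by auto
    then show "mult (inf a b) m = mult a (mult b m)" "mult m (inf a b) = mult (mult m a) b"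
      using F2 assoc by metis+
    show "mult (mult a m) b = mult a (mult m b)" by (rule assoc)
  qed
  have aq: "AA_quantale AC mult mult mult"
    unfolding AA_quantale_def using bm assoc mjl mjr by auto
  have iaq: "involutive_AA_quantale AC mult mult mult star"
    unfolding involutive_AA_quantale_def
  proof (intro conjI allI ballI)
    fix a b x assume "a \<in> AC" "b \<in> AC"
    then have ab: "star a = a" "star b = b" using AC F1 by auto
    show "star (mult a (mult x b)) = mult b (mult (star x) a)" using sm ab by (simp add: assoc)
  qed (use aq sjp ss sm in auto)
  have bqf: "based_quantal_frame AC mult mult mult star"
    unfolding based_quantal_frame_def
  proof (intro conjI allI ballI)
    fix a x y assume "a \<in> AC"
    then have a: "a \<le> e" using AC by auto
    show "inf (mult a x) y = mult a (inf x y)"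
      using F3l[OF a, of x] F3l[OF a, of "inf x y"] by (simp add: inf_assoc)
    show "inf (mult x a) y = mult (inf x y) a"
      using F3r[OF a, of x] F3r[OF a, of "inf x y"] by (simp add: inf_aci)
  qed (use iaq fr in auto)
  have sjp': "join_pres (\<lambda>q. inf (mult q top) e)"
    using zjp F4 by (metis (no_types, lifting) ext)
  have supp: "is_support AC mult mult star (\<lambda>q. inf (mult q top) e)"
    unfolding is_support_def
  proof (intro conjI allI)
    show "join_pres (\<lambda>q. inf (mult q top) e)" by (rule sjp')
    fix x y
    show "inf (mult x top) e \<in> AC" using AC by simp
    show "inf (mult top top) e = Sup AC" using F4[of top] ztop AC_def topA by simp
    show "mult (inf (mult x top) e) y \<le> mult (mult x (star x)) y"
      by (rule mmono[OF _ order_refl]) (metis F4 zxx)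
    show "mult (inf (mult x top) e) x = x"
    proof (rule antisym)
      show "mult (inf (mult x top) e) x \<le> x" using mmono[of "inf (mult x top) e" e x x] ul by simp
      show "x \<le> mult (inf (mult x top) e) x" using xz F4 by metis
    qed
  qed
  have eqv: "equivariant_support AC mult (\<lambda>q. inf (mult q top) e)"
    unfolding equivariant_support_def
  proof (intro ballI allI)
    fix a x assume "a \<in> AC"
    then have a: "a \<le> e" using AC by simp
    have "inf (mult (mult a x) top) e = inf (inf (mult a top) (mult x top)) e"
      using F3l[OF a, of "mult x top"] assoc by simp
    also have "\<dots> = inf (inf (mult a top) e) (mult x top)" by (simp add: inf_aci)
    also have "\<dots> = inf a (mult x top)" using F5l a by simp
    also have "\<dots> = inf a (inf (mult x top) e)" using a by (metis inf.absorb1 inf_left_commute inf_commute)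
    finally show "inf (mult (mult a x) top) e = inf a (inf (mult x top) e)" .
  qed
  have refl: "reflexive_bqf AC mult mult (\<lambda>q. inf q e)"
    unfolding reflexive_bqf_def frame_hom_to_def
  proof (intro conjI allI ballI)
    fix x y a
    show "inf x e \<in> AC" using AC by simp
    show "inf (inf x y) e = inf (inf x e) (inf y e)" by (simp add: inf_aci)
    show "inf top e = Sup AC" using topA AC_def by simp
    show "join_pres (\<lambda>q. inf q e)" unfolding join_pres_def using dist by (simp add: inf_commute)
    assume "a \<in> AC"
    then have a: "a \<le> e" using AC by simp
    show "inf (mult a top) e = a" using F5l a by simp
    show "inf (mult top a) e = a" using F5r a by simp
  qed
  have il: "inverse_law mult mult star (\<lambda>q. inf q e)"
    unfolding inverse_law_def
  proof (intro allI antisym)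
    fix a
    let ?b = "inf a e"
    let ?P = "{s. sup (mult s (star s)) (mult (star s) s) \<le> e}"
    let ?S = "{inf x y |x y. mult x (star y) \<le> a}"
    have b: "?b \<le> e" by simp
    have "mult ?b top = Sup ((mult ?b) ` ?P)" using pu mjr[of ?b] unfolding join_pres_def by metis
    also have "\<dots> \<le> Sup ?S"
    proof (rule Sup_least)
      fix w assume "w \<in> (mult ?b) ` ?P"
      then obtain s where s: "sup (mult s (star s)) (mult (star s) s) \<le> e" "w = mult ?b s" by auto
      have sse: "mult s (star s) \<le> e" using s(1) by simp
      have "mult w (star w) = mult ?b (mult (mult s (star s)) ?b)"
        using s(2) sm F1[OF b] by (simp add: assoc)
      also have "\<dots> \<le> mult ?b (mult e ?b)" by (intro mmono sse order_refl)
      also have "\<dots> = inf ?b ?b" using ul F2[OF b b] by simp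
      also have "\<dots> \<le> a" by simp
      finally have "mult w (star w) \<le> a" .
      then have "inf w w \<in> ?S" by blast
      then show "w \<le> Sup ?S" by (simp add: Sup_upper)
    qed
    finally show "mult ?b top \<le> Sup ?S" .
    show "Sup ?S \<le> mult ?b top"
    proof (rule Sup_least)
      fix w assume "w \<in> ?S"
      then obtain x y where xy: "w = inf x y" "mult x (star y) \<le> a" by blast
      have "mult w (star w) \<le> mult x (star y)" using xy(1) by (intro mmono smono) simp_all
      then have "\<zeta> w \<le> a" using zxx[of w] xy(2) by (meson order_trans)
      then have zb: "\<zeta> w \<le> ?b" using ze by simp
      have "w \<le> mult (\<zeta> w) w" by (rule xz)
      also have "\<dots> \<le> mult ?b top" using zb by (rule mmono) simp
      finally show "w \<le> mult ?b top" .
    qed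
  qed
  show ?thesis unfolding Let_def using bqf supp eqv refl il AC_def by simp
qed

lemma part1:
  fixes AC :: "'a::complete_lattice set" and lact :: "'a \<Rightarrow> 'q::complete_lattice \<Rightarrow> 'q"
    and ract :: "'q \<Rightarrow> 'a \<Rightarrow> 'q" and mult :: "'q \<Rightarrow> 'q \<Rightarrow> 'q" and star :: "'q \<Rightarrow> 'q"
    and \<sigma> :: "'q \<Rightarrow> 'a" and \<upsilon> :: "'q \<Rightarrow> 'a" and e :: 'q
  assumes bqf: "based_quantal_frame AC lact ract mult star"
    and supp: "is_support AC lact mult star \<sigma>" and eqv: "equivariant_support AC lact \<sigma>"
    and refl: "reflexive_bqf AC lact ract \<upsilon>" and unit: "mult_unit mult e"
    and inv: "inverse_law lact mult star \<upsilon>"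
  shows "inverse_quantal_frame mult star e"
proof -
  from bqf have iq: "involutive_AA_quantale AC lact ract mult star" and fr: "is_frame_type TYPE('q)"
    and lmeet: "\<And>a x y. a \<in> AC \<Longrightarrow> inf (lact a x) y = lact a (inf x y)"
    unfolding based_quantal_frame_def by auto
  from iq have aq: "AA_quantale AC lact ract mult" and sjp: "join_pres star"
    and ss: "\<And>x. star (star x) = x" and sm: "\<And>x y. star (mult x y) = mult (star y) (star x)"
    unfolding involutive_AA_quantale_def by auto
  from aq have bm: "bimodule AC lact ract" and assoc: "\<And>x y z. mult (mult x y) z = mult x (mult y z)"
    and mjl: "\<And>y. join_pres (\<lambda>x. mult x y)" and mjr: "\<And>x. join_pres (mult x)"
    and lm: "\<And>a x y. a \<in> AC \<Longrightarrow> mult (lact a x) y = lact a (mult x y)"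
    and rm: "\<And>a x y. a \<in> AC \<Longrightarrow> mult (ract x a) y = mult x (lact a y)"
    unfolding AA_quantale_def by auto
  from bm have lc: "locale_carrier AC"
    and lsup: "\<And>S m. S \<subseteq> AC \<Longrightarrow> lact (Sup S) m = Sup ((\<lambda>a. lact a m) ` S)"
    and ltop: "\<And>m. lact (Sup AC) m = m"
    unfolding bimodule_def by auto
  from lc have ACsup: "\<And>S. S \<subseteq> AC \<Longrightarrow> Sup S \<in> AC" unfolding locale_carrier_def by auto
  have topAC: "Sup AC \<in> AC" using ACsup by simp
  from supp have sAC: "\<And>x. \<sigma> x \<in> AC" and sjp': "join_pres \<sigma>"
    and sxx: "\<And>x y. lact (\<sigma> x) y \<le> mult (mult x (star x)) y" and sx: "\<And>x. lact (\<sigma> x) x = x"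
    unfolding is_support_def by auto
  from eqv have seq: "\<And>a x. a \<in> AC \<Longrightarrow> \<sigma> (lact a x) = inf a (\<sigma> x)"
    unfolding equivariant_support_def by auto
  from refl have uAC: "\<And>x. \<upsilon> x \<in> AC" and utop: "\<upsilon> top = Sup AC"
    and ul: "\<And>a. a \<in> AC \<Longrightarrow> \<upsilon> (lact a top) = a"
    unfolding reflexive_bqf_def frame_hom_to_def by auto
  from unit have eu: "\<And>x. mult e x = x" "\<And>x. mult x e = x" unfolding mult_unit_def by auto
  have mmono: "mult x y \<le> mult x' y'" if "x \<le> x'" "y \<le> y'" for x y x' y'
    using jp_mono[OF mjl that(1)] jp_mono[OF mjr that(2)] by (meson order_trans)
  have smono: "x \<le> y \<Longrightarrow> star x \<le> star y" for x y using jp_mono[OF sjp] .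
  have sgmono: "x \<le> y \<Longrightarrow> \<sigma> x \<le> \<sigma> y" for x y using jp_mono[OF sjp'] .
  have lamono: "lact a m \<le> lact b m" if "a \<in> AC" "b \<in> AC" "a \<le> b" for a b m
  proof -
    have "lact b m = lact (Sup {a, b}) m" using that(3) by (simp add: sup_absorb2)
    also have "\<dots> = Sup {lact a m, lact b m}" using lsup[of "{a,b}" m] that by simp
    finally show ?thesis by (metis Sup_upper insertI1)
  qed
  have se: "star e = e"
  proof -
    have "e = star (mult (star e) e)" using eu ss by simp
    also have "\<dots> = mult (star e) e" using sm ss by simp
    also have "\<dots> = star e" using eu by simp
    finally show ?thesis by simp
  qed
  have stop: "star top = top"
  proof -
    have "star (star top) \<le> star top" by (rule smono) simp
    thus ?thesis using ss by (simp add: top_le)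
  qed
  define \<zeta> where "\<zeta> x = lact (\<sigma> x) e" for x
  have le_top: "\<sigma> x \<le> Sup AC" for x using sAC by (simp add: Sup_upper)
  have stab: "stable_unital_support mult star e \<zeta>"
    unfolding stable_unital_support_def
  proof (intro conjI allI)
    show "join_pres \<zeta>" unfolding join_pres_def
    proof
      fix X
      have "\<zeta> (Sup X) = lact (Sup (\<sigma> ` X)) e" using sjp' unfolding \<zeta>_def join_pres_def by simp
      also have "\<dots> = Sup ((\<lambda>a. lact a e) ` (\<sigma> ` X))" using lsup sAC by blast
      also have "\<dots> = Sup (\<zeta> ` X)" unfolding \<zeta>_def image_image by simp
      finally show "\<zeta> (Sup X) = Sup (\<zeta> ` X)" .
    qed
    fix x y
    show "\<zeta> x \<le> e" unfolding \<zeta>_def using lamono[OF sAC topAC le_top, of x e] ltop by simp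
    show "\<zeta> x \<le> mult x (star x)" unfolding \<zeta>_def using sxx[of x e] eu by simp
    have zx: "mult (\<zeta> x) y = lact (\<sigma> x) y" for x y unfolding \<zeta>_def using lm[OF sAC] eu by simp
    show "x \<le> mult (\<zeta> x) x" using zx sx by simp
    have sxt: "\<sigma> (mult x z) \<le> \<sigma> x" for x z
    proof -
      have "\<sigma> (mult x z) \<le> \<sigma> (mult x top)" by (intro sgmono mmono) simp_all
      also have "mult x top = lact (\<sigma> x) (mult x top)" using lm[OF sAC, of x x top] sx by simp
      also have "\<sigma> \<dots> = inf (\<sigma> x) (\<sigma> (mult x top))" using seq sAC by blast
      finally show ?thesis by simp
    qed
    let ?x' = "mult x (\<zeta> y)"
    have xy: "mult x y = mult ?x' y" using zx[of y y] sx[of y] assoc by simp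
    have "\<sigma> (mult x y) = \<sigma> ?x'"
    proof (rule antisym)
      show "\<sigma> (mult x y) \<le> \<sigma> ?x'" using xy sxt by metis
      have "?x' \<le> mult x (mult y (star y))"
        using sxx[of y e] eu by (intro mmono) (simp_all add: \<zeta>_def)
      then have "\<sigma> ?x' \<le> \<sigma> (mult (mult x y) (star y))" using assoc sgmono by simp
      also have "\<dots> \<le> \<sigma> (mult x y)" by (rule sxt)
      finally show "\<sigma> ?x' \<le> \<sigma> (mult x y)" .
    qed
    then show "\<zeta> (mult x y) = \<zeta> (mult x (\<zeta> y))" unfolding \<zeta>_def by simp
  qed
  let ?L = "{inf x y |x y. mult x (star y) \<le> e}"
  have il: "lact (\<upsilon> e) top = Sup ?L" using inv unfolding inverse_law_def by blast
  have "mult e (star e) \<le> e" using eu se by simp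
  then have "e \<in> ?L" by (metis (mono_tags, lifting) inf.idem mem_Collect_eq)
  then have "e \<le> lact (\<upsilon> e) top" using il by (simp add: Sup_upper)
  then have "e = lact (\<upsilon> e) e" using lmeet[OF uAC, of e top e] by (simp add: inf_absorb2)
  then have "top = lact (\<upsilon> e) top" using lm[OF uAC, of e e top] eu by metis
  then have "\<upsilon> e = Sup AC" using ul[OF uAC] utop by metis
  then have SL: "Sup ?L = top" using il ltop by simp
  have SR: "Sup (star ` ?L) = top" using SL sjp stop unfolding join_pres_def by metis
  let ?P = "{s. sup (mult s (star s)) (mult (star s) s) \<le> e}"
  have "inf (Sup ?L) (Sup (star ` ?L)) \<le> Sup ?P"
  proof (rule frame_inf_Sup[OF fr])
    fix l r assume l: "l \<in> ?L" and r: "r \<in> star ` ?L"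
    from l obtain x y where xy: "l = inf x y" "mult x (star y) \<le> e" by blast
    from r obtain l' where l': "l' \<in> ?L" "r = star l'" by blast
    from l' obtain x' y' where xy': "l' = inf x' y'" "mult x' (star y') \<le> e" by blast
    have l1: "mult l (star l) \<le> e"
      using xy by (meson inf_le1 inf_le2 mmono order_trans smono)
    have l2: "mult l' (star l') \<le> e"
      using xy' by (meson inf_le1 inf_le2 mmono order_trans smono)
    let ?s = "inf l r"
    have "mult ?s (star ?s) \<le> mult l (star l)" by (intro mmono smono) simp_all
    moreover have "mult (star ?s) ?s \<le> mult (star r) r" by (intro mmono smono) simp_all
    moreover have "mult (star r) r = mult l' (star l')" using l' ss by simp
    ultimately have "?s \<in> ?P" using l1 l2 by auto
    then show "?s \<le> Sup ?P" by (rule Sup_upper)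
  qed
  then have PU: "Sup ?P = top" using SL SR by (simp add: top_le)
  have uiq: "unital_involutive_quantale mult star e"
    unfolding unital_involutive_quantale_def mult_unit_def using assoc mjl mjr eu sjp ss sm by auto
  show ?thesis unfolding inverse_quantal_frame_def using uiq fr stab PU by blast
qed

theorem theorem5p10:
  shows
  "(\<forall>(AC :: 'a::complete_lattice set) (lact :: 'a \<Rightarrow> 'q::complete_lattice \<Rightarrow> 'q)
      (ract :: 'q \<Rightarrow> 'a \<Rightarrow> 'q) (mult :: 'q \<Rightarrow> 'q \<Rightarrow> 'q) (star :: 'q \<Rightarrow> 'q)
      (\<sigma> :: 'q \<Rightarrow> 'a) (\<upsilon> :: 'q \<Rightarrow> 'a) (e :: 'q).
      based_quantal_frame AC lact ract mult star \<and>
      is_support AC lact mult star \<sigma> \<and> equivariant_support AC lact \<sigma> \<and>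
      reflexive_bqf AC lact ract \<upsilon> \<and>
      mult_unit mult e \<and>
      inverse_law lact mult star \<upsilon>
      \<longrightarrow> inverse_quantal_frame mult star e)
   \<and>
   (\<forall>(mult :: 'p::complete_lattice \<Rightarrow> 'p \<Rightarrow> 'p) (star :: 'p \<Rightarrow> 'p) (e :: 'p).
      inverse_quantal_frame mult star e \<longrightarrow>
      (let AC = {a. a \<le> e}; \<sigma> = (\<lambda>q. inf (mult q top) e); \<upsilon> = (\<lambda>q. inf q e) in
        based_quantal_frame AC mult mult mult star \<and>
        is_support AC mult mult star \<sigma> \<and> equivariant_support AC mult \<sigma> \<and>
        reflexive_bqf AC mult mult \<upsilon> \<and>
        inverse_law mult mult star \<upsilon>))"
  proof (intro conjI allI impI)
  fix AC :: "'a::complete_lattice set" and lact :: "'a \<Rightarrow> 'q::complete_lattice \<Rightarrow> 'q"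
    and ract mult star \<sigma> \<upsilon> e
  assume h: "based_quantal_frame AC lact ract mult star \<and>
      is_support AC lact mult star \<sigma> \<and> equivariant_support AC lact \<sigma> \<and>
      reflexive_bqf AC lact ract \<upsilon> \<and> mult_unit mult e \<and> inverse_law lact mult star \<upsilon>"
  then show "inverse_quantal_frame mult star e" using part1 by blast
next
  fix mult :: "'p::complete_lattice \<Rightarrow> 'p \<Rightarrow> 'p" and star e
  assume "inverse_quantal_frame mult star e"
  then show "let AC = {a. a \<le> e}; \<sigma> = (\<lambda>q. inf (mult q top) e); \<upsilon> = (\<lambda>q. inf q e) in
        based_quantal_frame AC mult mult mult star \<and>
        is_support AC mult mult star \<sigma> \<and> equivariant_support AC mult \<sigma> \<and>
        reflexive_bqf AC mult mult \<upsilon> \<and>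
        inverse_law mult mult star \<upsilon>" by (rule part2)
qed

end
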